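(* Let $G$ be a framed graph with framing $f$, and let $a,b\in V(G)$ be distinct vertices. Let $\widetilde G_{ab}$ be the framed graph on $V(G)$ obtained from $G$ as follows: for every vertex $c\ne a,b$, the adjacency of $c$ and $a$ is toggled iff $c$ is adjacent to $b$ in $G$; the adjacency of $a$ and $b$ is toggled iff $f(b)=1$; the framing of $a$ becomes $f(a)+f(b)\pmod 2$; all other adjacencies and framings are unchanged. Then $$D(\widetilde G_{ab})=\widetilde{D(G)}_{ab},$$ where $D(\cdot)$ denotes the nondegeneracy delta-matroid.
   Context: A framed graph is a simple graph $G$ with a map $f:V(G)\to\{0,1\}$; its adjacency matrix over $\mathbb{F}_2$ has diagonal entry $f(v)$ at $v$ and the usual off-diagonal entries. Its nondegeneracy delta-matroid is $D(G)=(V(G);\{U\subseteq V(G)\mid$ the adjacency matrix of the induced framed subgraph $G_U$ is nondegenerate over $\mathbb{F}_2\})$ (empty matrix counts as nondegenerate). For a set system $D=(E;\Phi)$ ($E$ finite, $\Phi\subseteq 2^E$ nonempty) and distinct $a,b\in E$, the sliding of $a$ over $b$ is $\widetilde D_{ab}=(E;\widetilde\Phi_{ab})$ with $\widetilde\Phi_{ab}=\Phi\,\Delta\,\{\phi\sqcup\{a\}\mid \phi\subseteq E\setminus\{a,b\},\ \phi\sqcup\{b\}\in\Phi\}$. *)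

theory Defs
  imports "HOL-Library.Z2" "HOL-Combinatorics.Permutations"
begin

definition framed_graph :: "'a set \<Rightarrow> ('a \<Rightarrow> 'a \<Rightarrow> bool) \<Rightarrow> ('a \<Rightarrow> bit) \<Rightarrow> bool" where
  "framed_graph V Adj fr \<longleftrightarrow> finite V \<and> (\<forall>x y. Adj x y \<longrightarrow> x \<in> V \<and> y \<in> V)
     \<and> (\<forall>x y. Adj x y \<longleftrightarrow> Adj y x) \<and> (\<forall>x. \<not> Adj x x)"

definition adj_matrix :: "('a \<Rightarrow> 'a \<Rightarrow> bool) \<Rightarrow> ('a \<Rightarrow> bit) \<Rightarrow> 'a \<Rightarrow> 'a \<Rightarrow> bit" where
  "adj_matrix Adj fr x y = (if x = y then fr x else of_bool (Adj x y))"

definition det_on :: "'a set \<Rightarrow> ('a \<Rightarrow> 'a \<Rightarrow> 'r::comm_ring_1) \<Rightarrow> 'r" where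
  "det_on U M = (\<Sum>p\<in>{p. p permutes U}. of_int (sign p) * (\<Prod>u\<in>U. M u (p u)))"

text \<open>Nondegeneracy delta-matroid: the feasible sets U \<subseteq> V whose induced framed subgraph
  has nondegenerate adjacency matrix over F_2 (the empty matrix has determinant 1).\<close>
definition nondeg_feasible :: "'a set \<Rightarrow> ('a \<Rightarrow> 'a \<Rightarrow> bool) \<Rightarrow> ('a \<Rightarrow> bit) \<Rightarrow> 'a set set" where
  "nondeg_feasible V Adj fr = {U. U \<subseteq> V \<and> det_on U (adj_matrix Adj fr) \<noteq> 0}"

definition slide_sys :: "'a set \<Rightarrow> 'a set set \<Rightarrow> 'a \<Rightarrow> 'a \<Rightarrow> 'a set set" where
  "slide_sys E Phi a b = Phi \<union> {\<phi> \<union> {a} | \<phi>. \<phi> \<subseteq> E - {a, b} \<and> \<phi> \<union> {b} \<in> Phi}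
      - (Phi \<inter> {\<phi> \<union> {a} | \<phi>. \<phi> \<subseteq> E - {a, b} \<and> \<phi> \<union> {b} \<in> Phi})"

definition slide_adj :: "'a set \<Rightarrow> ('a \<Rightarrow> 'a \<Rightarrow> bool) \<Rightarrow> ('a \<Rightarrow> bit) \<Rightarrow> 'a \<Rightarrow> 'a \<Rightarrow> 'a \<Rightarrow> 'a \<Rightarrow> bool" where
  "slide_adj V Adj fr a b x y =
     (if {x, y} = {a, b} then (Adj x y \<noteq> (fr b = 1))
      else if x = a \<and> y \<in> V - {a, b} then (Adj x y \<noteq> Adj b y)
      else if y = a \<and> x \<in> V - {a, b} then (Adj x y \<noteq> Adj b x)
      else Adj x y)"

definition slide_frame :: "('a \<Rightarrow> bit) \<Rightarrow> 'a \<Rightarrow> 'a \<Rightarrow> 'a \<Rightarrow> bit" where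
  "slide_frame fr a b = fr(a := fr a + fr b)"

end

theory Submission imports Defs begin

definition D :: "'a set \<Rightarrow> ('a \<Rightarrow> 'a \<Rightarrow> bit) \<Rightarrow> bit" where
  "D U M = (\<Sum>p\<in>{p. p permutes U}. \<Prod>u\<in>U. M u (p u))"

lemma bit_add_self[simp]: "(x::bit) + x = 0"
  by (cases x) simp_all

lemma of_int_sign_bit: "(of_int (sign p) :: bit) = 1"
  by (cases p rule: sign_cases) simp_all

lemma det_on_D: "det_on U M = D U M"
  unfolding det_on_def D_def by (simp only: of_int_sign_bit mult_1_left)

lemma D_cong:
  assumes "\<And>u v. u \<in> U \<Longrightarrow> v \<in> U \<Longrightarrow> M u v = N u v"
  shows "D U M = D U N"
  unfolding D_def
  by (rule sum.cong[OF refl], rule prod.cong[OF refl]) (auto intro: assms permutes_in_image[THEN iffD2])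

lemma D_row:
  assumes fin: "finite U" and aU: "a \<in> U"
    and ra: "\<And>v. M a v = N a v + K a v"
    and ro: "\<And>u v. u \<noteq> a \<Longrightarrow> M u v = N u v \<and> K u v = N u v"
  shows "D U M = D U N + D U K"
proof -
  have "(\<Prod>u\<in>U. M u (p u)) = (\<Prod>u\<in>U. N u (p u)) + (\<Prod>u\<in>U. K u (p u))" for p
  proof -
    have e: "(\<Prod>u\<in>U - {a}. M u (p u)) = (\<Prod>u\<in>U - {a}. N u (p u))"
            "(\<Prod>u\<in>U - {a}. K u (p u)) = (\<Prod>u\<in>U - {a}. N u (p u))"
      using ro by (auto intro: prod.cong)
    show ?thesis
      unfolding prod.remove[OF fin aU] e ra distrib_right ..
  qed
  then show ?thesis unfolding D_def by (simp only: sum.distrib)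
qed

lemma D_transpose:
  assumes fin: "finite U"
  shows "D U M = D U (\<lambda>x y. M y x)"
proof -
  have "D U (\<lambda>x y. M y x) = (\<Sum>p\<in>{p. p permutes U}. \<Prod>u\<in>U. M (p u) u)"
    unfolding D_def by simp
  also have "\<dots> = (\<Sum>p\<in>{p. p permutes U}. \<Prod>u\<in>U. M u (inv p u))"
  proof (rule sum.cong[OF refl])
    fix p assume "p \<in> {p. p permutes U}"
    then have p: "p permutes U" by simp
    have "(\<Prod>u\<in>U. M u (inv p u)) = (\<Prod>u\<in>p ` U. M u (inv p u))"
      using permutes_image[OF p] by simp
    also have "\<dots> = (\<Prod>u\<in>U. M (p u) (inv p (p u)))"
      using prod.reindex[OF permutes_inj_on[OF p], of "\<lambda>u. M u (inv p u)"] unfolding comp_def .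
    also have "\<dots> = (\<Prod>u\<in>U. M (p u) u)"
      using permutes_inverses(2)[OF p] by simp
    finally show "(\<Prod>u\<in>U. M (p u) u) = (\<Prod>u\<in>U. M u (inv p u))" by simp
  qed
  also have "\<dots> = D U M"
    unfolding D_def
    by (rule sum.reindex_bij_witness[where i=inv and j=inv])
       (auto intro: permutes_inv simp: permutes_inv_inv)
  finally show ?thesis by simp
qed

lemma D_dup_rows:
  assumes fin: "finite U" and aU: "a \<in> U" and bU: "b \<in> U" and ab: "a \<noteq> b"
    and rows: "\<And>v. M a v = M b v"
  shows "D U M = 0"
proof -
  define t where "t = Transposition.transpose a b"
  define P where "P = {p. p permutes U}"
  define Pe where "Pe = {p\<in>P. evenperm p}"
  define Po where "Po = {p\<in>P. \<not> evenperm p}"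
  define f where "f p = (\<Prod>u\<in>U. M u (p u))" for p
  have finP: "finite P" unfolding P_def using finite_permutations[OF fin] .
  have tU: "t permutes U" unfolding t_def using permutes_swap_id[OF aU bU] .
  have Mt: "M (t u) v = M u v" for u v
    unfolding t_def using rows by (cases "u = a"; cases "u = b") auto
  have tt: "t \<circ> t = id" unfolding t_def by simp
  have split: "sum f P = sum f Pe + sum f Po"
  proof -
    have eq: "P = Pe \<union> Po" unfolding Pe_def Po_def by auto
    have "finite Pe" "finite Po" unfolding Pe_def Po_def using finP by auto
    then show ?thesis by (subst eq, rule sum.union_disjoint) (auto simp: Pe_def Po_def)
  qed
  have "sum f Po = sum (\<lambda>p. f (p \<circ> t)) Pe"
  proof (rule sum.reindex_bij_witness[where i="\<lambda>p. p \<circ> t" and j="\<lambda>p. p \<circ> t"])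
    fix p assume "p \<in> Pe"
    then have p: "p permutes U" "evenperm p" unfolding Pe_def P_def by auto
    have pp: "permutation p" using p(1) fin permutation_permutes by blast
    have pt: "permutation t" unfolding t_def by (rule permutation_swap_id)
    show "p \<circ> t \<circ> t = p" by (simp add: o_assoc[symmetric] tt)
    show "p \<circ> t \<in> Po"
      unfolding Po_def P_def using permutes_compose[OF tU p(1)] evenperm_comp[OF pp pt] p(2)
        evenperm_swap[of a b] ab unfolding t_def by auto
  next
    fix p assume "p \<in> Po"
    then have p: "p permutes U" "\<not> evenperm p" unfolding Po_def P_def by auto
    have pp: "permutation p" using p(1) fin permutation_permutes by blast
    have pt: "permutation t" unfolding t_def by (rule permutation_swap_id)
    show "p \<circ> t \<circ> t = p" by (simp add: o_assoc[symmetric] tt)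
    show "p \<circ> t \<in> Pe"
      unfolding Pe_def P_def using permutes_compose[OF tU p(1)] evenperm_comp[OF pp pt] p(2)
        evenperm_swap[of a b] ab unfolding t_def by auto
    show "f (p \<circ> t \<circ> t) = f p" by (simp add: o_assoc[symmetric] tt)
  qed
  also have "\<dots> = sum f Pe"
  proof (rule sum.cong[OF refl])
    fix p assume "p \<in> Pe"
    then have p: "p permutes U" unfolding Pe_def P_def by auto
      have "f (p \<circ> t) = (\<Prod>u\<in>U. M u (p (t u)))" unfolding f_def by simp
      also have "\<dots> = (\<Prod>u\<in>t ` U. M (t u) (p (t (t u))))"
        using prod.reindex[OF permutes_inj_on[OF tU], of "\<lambda>u. M (t u) (p (t (t u)))"]
        using tt unfolding comp_def fun_eq_iff by simp
      also have "\<dots> = (\<Prod>u\<in>U. M u (p u))"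
        using permutes_image[OF tU] Mt tt unfolding fun_eq_iff comp_def by simp
      finally show "f (p \<circ> t) = f p" unfolding f_def by simp
  qed
  finally have "sum f P = 0" unfolding split by (simp only: bit_add_self)
  then show ?thesis unfolding D_def P_def f_def .
qed

lemma D_relabel:
  assumes ss: "\<And>x. s (s x) = x"
  shows "D (s ` U) M = D U (\<lambda>x y. M (s x) (s y))"
proof -
  have injs: "inj_on s A" for A by (metis inj_onI ss)
  have perm: "s \<circ> p \<circ> s permutes s ` U" if p: "p permutes U" for p and U :: "'a set"
  proof (rule bij_imp_permutes)
    have b1: "bij_betw s (s ` U) U"
      using injs[of "s ` U"] by (simp add: bij_betw_def image_image ss)
    have b2: "bij_betw s U (s ` U)"
      using injs[of U] by (simp add: bij_betw_def)
    show "bij_betw (s \<circ> p \<circ> s) (s ` U) (s ` U)"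
      by (rule bij_betw_trans[OF b1 bij_betw_trans[OF permutes_imp_bij[OF p] b2]])
    fix x assume "x \<notin> s ` U"
    then have "s x \<notin> U" by (metis image_eqI ss)
    then show "(s \<circ> p \<circ> s) x = x" using p ss by (simp add: permutes_not_in)
  qed
  have "D (s ` U) M = (\<Sum>p\<in>{p. p permutes U}. \<Prod>x\<in>s ` U. M x ((s \<circ> p \<circ> s) x))"
    unfolding D_def
  proof (rule sum.reindex_bij_witness[where i="\<lambda>q. s \<circ> q \<circ> s" and j="\<lambda>q. s \<circ> q \<circ> s"])
    fix q assume "q \<in> {p. p permutes s ` U}"
    then have q: "q permutes s ` U" by simp
    show "s \<circ> (s \<circ> q \<circ> s) \<circ> s = q" by (simp add: fun_eq_iff ss)
    show "s \<circ> q \<circ> s \<in> {p. p permutes U}" using perm[OF q] by (simp add: image_image ss)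
    show "(\<Prod>x\<in>s ` U. M x ((s \<circ> (s \<circ> q \<circ> s) \<circ> s) x)) = (\<Prod>x\<in>s ` U. M x (q x))"
      by (simp add: ss)
  next
    fix p assume "p \<in> {p. p permutes U}"
    then have p: "p permutes U" by simp
    show "s \<circ> (s \<circ> p \<circ> s) \<circ> s = p" by (simp add: fun_eq_iff ss)
    show "s \<circ> p \<circ> s \<in> {p. p permutes s ` U}" using perm[OF p] by simp
  qed
  also have "\<dots> = D U (\<lambda>x y. M (s x) (s y))"
    unfolding D_def
  proof (rule sum.cong[OF refl])
    fix p
    show "(\<Prod>x\<in>s ` U. M x ((s \<circ> p \<circ> s) x)) = (\<Prod>u\<in>U. M (s u) (s (p u)))"
      using prod.reindex[OF injs[of U], of "\<lambda>x. M x ((s \<circ> p \<circ> s) x)"] ss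
      unfolding comp_def by simp
  qed
  finally show ?thesis .
qed

lemma bit_cancel: "(x::bit) + y + (y + z) = x + z"
  by (cases x; cases y; cases z) simp_all

lemma bit_sum_nz: "((x::bit) + y \<noteq> 0) = ((x \<noteq> 0) \<noteq> (y \<noteq> 0))"
  by (cases x; cases y) simp_all

lemma slide_sys_mem:
  "X \<in> slide_sys E Phi a b \<longleftrightarrow>
     (X \<in> Phi) \<noteq> (a \<in> X \<and> X - {a} \<subseteq> E - {a, b} \<and> insert b (X - {a}) \<in> Phi)"
proof -
  have "(\<exists>\<phi>. X = \<phi> \<union> {a} \<and> \<phi> \<subseteq> E - {a, b} \<and> \<phi> \<union> {b} \<in> Phi) \<longleftrightarrow>
        (a \<in> X \<and> X - {a} \<subseteq> E - {a, b} \<and> insert b (X - {a}) \<in> Phi)" (is "?L = ?R")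
  proof
    assume ?L
    then obtain \<phi> where "X = \<phi> \<union> {a}" "\<phi> \<subseteq> E - {a, b}" "\<phi> \<union> {b} \<in> Phi" by blast
    moreover then have "X - {a} = \<phi>" by auto
    ultimately show ?R by auto
  next
    assume ?R
    then show ?L by (intro exI[of _ "X - {a}"]) auto
  qed
  then show ?thesis unfolding slide_sys_def by auto
qed

lemma of_bool_neq_bit: "(of_bool (P \<noteq> Q) :: bit) = of_bool P + of_bool Q"
  by (cases P; cases Q) simp_all

lemma key_entry:
  assumes fg: "framed_graph V Adj fr" and aV: "a \<in> V" and bV: "b \<in> V" and ab: "a \<noteq> b"
    and xV: "x \<in> V" and yV: "y \<in> V"
  shows "adj_matrix (slide_adj V Adj fr a b) (slide_frame fr a b) x y =
     (adj_matrix Adj fr x y + (if y = a then adj_matrix Adj fr x b else 0)) +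
     (if x = a then adj_matrix Adj fr b y + (if y = a then adj_matrix Adj fr b b else 0) else 0)"
proof -
  have sym: "Adj u v = Adj v u" for u v using fg unfolding framed_graph_def by blast
  have fb: "fr b = of_bool (fr b = 1)" by (cases "fr b") simp_all
  have e2: "x + y + (z + y) = x + (z::bit)" for x y z
    by (cases x; cases y; cases z) simp_all
  show ?thesis
  proof (cases "x = a")
    case xa: True
    show ?thesis
    proof (cases "y = a")
      case True
      then show ?thesis using xa ab
        by (cases "fr a"; cases "fr b"; cases "Adj a b")
           (simp_all add: adj_matrix_def slide_frame_def sym[of b a])
    next
      case ya: False
      show ?thesis
      proof (cases "y = b")
        case True
        then show ?thesis using xa ya ab
          by (cases "fr b"; cases "Adj a b")
             (simp_all add: adj_matrix_def slide_adj_def)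
      next
        case False
        then have "{a, y} \<noteq> {a, b}" using ya ab by (auto simp: doubleton_eq_iff)
        then show ?thesis using xa ya ab False yV
          by (simp add: adj_matrix_def slide_adj_def of_bool_neq_bit)
      qed
    qed
  next
    case xa: False
    show ?thesis
    proof (cases "y = a")
      case ya: True
      show ?thesis
      proof (cases "x = b")
        case True
        then show ?thesis using xa ya ab
          by (cases "fr b"; cases "Adj a b")
             (simp_all add: adj_matrix_def slide_adj_def sym[of b a] doubleton_eq_iff)
      next
        case False
        then have "{x, a} \<noteq> {a, b}" using xa ab by (auto simp: doubleton_eq_iff)
        then show ?thesis using xa ya ab False xV
          by (simp add: adj_matrix_def slide_adj_def of_bool_neq_bit sym[of b x])
      qed
    next
      case ya: False
      then have "{x, y} \<noteq> {a, b}" using xa by (auto simp: doubleton_eq_iff)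
      then show ?thesis using xa ya
        by (simp add: adj_matrix_def slide_adj_def slide_frame_def)
    qed
  qed
qed

lemma D_main:
  assumes fg: "framed_graph V Adj fr" and aV: "a \<in> V" and bV: "b \<in> V" and ab: "a \<noteq> b"
    and UV: "U \<subseteq> V"
  shows "D U (adj_matrix (slide_adj V Adj fr a b) (slide_frame fr a b)) =
     (if a \<in> U \<and> b \<notin> U then D U (adj_matrix Adj fr) + D (insert b (U - {a})) (adj_matrix Adj fr)
      else D U (adj_matrix Adj fr))"
proof -
  define A where "A = adj_matrix Adj fr"
  define A' where "A' = adj_matrix (slide_adj V Adj fr a b) (slide_frame fr a b)"
  define B where "B x y = A x y + (if y = a then A x b else 0)" for x y
  define M1 where "M1 u v = B u v + (if u = a then B b v else 0)" for u v
  define C where "C u v = (if u = a then B b v else B u v)" for u v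
  define Ar where "Ar u v = (if u = a then A b v else A u v)" for u v
  have fin: "finite U" using fg UV unfolding framed_graph_def by (meson finite_subset)
  have sym: "Adj u v = Adj v u" for u v using fg unfolding framed_graph_def by blast
  have Asym: "A u v = A v u" for u v unfolding A_def adj_matrix_def using sym by auto
  have key: "A' u v = M1 u v" if "u \<in> U" "v \<in> U" for u v
  proof -
    have "u \<in> V" "v \<in> V" using that UV by auto
    from key_entry[OF fg aV bV ab this] show ?thesis unfolding A'_def M1_def B_def A_def .
  qed
  have DA': "D U A' = D U M1" by (rule D_cong) (simp add: key)
  show ?thesis
  proof (cases "a \<in> U")
    case False
    have "D U M1 = D U A"
      by (rule D_cong) (use False in \<open>auto simp: M1_def B_def\<close>)
    then show ?thesis using False DA' unfolding A_def A'_def by simp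
  next
    case aU: True
    have r1: "D U M1 = D U B + D U C"
      by (rule D_row[OF fin aU]) (auto simp: M1_def C_def)
    have BT: "D U B = D U A + D U Ar"
    proof -
      have "D U B = D U (\<lambda>x y. B y x)" by (rule D_transpose[OF fin])
      also have "\<dots> = D U A + D U Ar"
        by (rule D_row[OF fin aU]) (auto simp: B_def Ar_def Asym)
      finally show ?thesis .
    qed
    show ?thesis
    proof (cases "b \<in> U")
      case bU: True
      have "D U C = 0" by (rule D_dup_rows[OF fin aU bU ab]) (simp add: C_def ab)
      moreover have "D U Ar = 0" by (rule D_dup_rows[OF fin aU bU ab]) (simp add: Ar_def ab)
      ultimately show ?thesis using DA' r1 BT bU unfolding A_def A'_def by simp
    next
      case bU: False
      define X where "X x y = (if y = a then A b x else A y x)" for x y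
      define Y where "Y x y = (if x = a then (if y = a then A b b else A y b) else X x y)" for x y
      define t where "t = Transposition.transpose a b"
      have "D U C = D U (\<lambda>x y. C y x)" by (rule D_transpose[OF fin])
      also have "\<dots> = D U X + D U Y"
        by (rule D_row[OF fin aU]) (auto simp: C_def X_def Y_def B_def)
      also have "D U X = D U Ar"
      proof -
        have "D U X = D U (\<lambda>x y. X y x)" by (rule D_transpose[OF fin])
        also have "\<dots> = D U Ar" by (rule D_cong) (auto simp: X_def Ar_def)
        finally show ?thesis .
      qed
      also have "D U Y = D U (\<lambda>x y. A (t x) (t y))"
      proof (rule D_cong)
        fix u v assume "u \<in> U" "v \<in> U"
        then have "u \<noteq> b" "v \<noteq> b" using bU by auto
        then show "Y u v = A (t u) (t v)"
          unfolding t_def Y_def X_def by (auto simp: Asym)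
      qed
      also have "\<dots> = D (t ` U) A"
        by (rule D_relabel[symmetric]) (simp add: t_def)
      also have "t ` U = insert b (U - {a})"
      proof
        show "t ` U \<subseteq> insert b (U - {a})"
          using aU bU ab unfolding t_def by (auto simp: transpose_def)
        show "insert b (U - {a}) \<subseteq> t ` U"
        proof
          fix x assume x: "x \<in> insert b (U - {a})"
          show "x \<in> t ` U"
          proof (cases "x = b")
            case True
            then have "x = t a" unfolding t_def by simp
            then show ?thesis using aU by blast
          next
            case False
            then have "x = t x" "x \<in> U" using x bU unfolding t_def by (auto simp: transpose_def)
            then show ?thesis by blast
          qed
        qed
      qed
      finally have CE: "D U C = D U Ar + D (insert b (U - {a})) A" .
      have "D U A' = D U A + D (insert b (U - {a})) A"
        unfolding DA' r1 BT CE by (rule bit_cancel)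
      then show ?thesis using aU bU unfolding A_def A'_def by simp
    qed
  qed
qed

theorem theorem4p2:
  fixes V :: "'a set" and Adj :: "'a \<Rightarrow> 'a \<Rightarrow> bool" and fr :: "'a \<Rightarrow> bit" and a b :: 'a
  assumes "framed_graph V Adj fr" and "a \<in> V" and "b \<in> V" and "a \<noteq> b"
  shows "nondeg_feasible V (slide_adj V Adj fr a b) (slide_frame fr a b)
           = slide_sys V (nondeg_feasible V Adj fr) a b"
proof (rule set_eqI)
  fix U
  let ?P = "nondeg_feasible V Adj fr"
  have memP: "W \<in> ?P \<longleftrightarrow> W \<subseteq> V \<and> D W (adj_matrix Adj fr) \<noteq> 0" for W
    unfolding nondeg_feasible_def det_on_D by simp
  have memL: "U \<in> nondeg_feasible V (slide_adj V Adj fr a b) (slide_frame fr a b) \<longleftrightarrow>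
      U \<subseteq> V \<and> D U (adj_matrix (slide_adj V Adj fr a b) (slide_frame fr a b)) \<noteq> 0"
    unfolding nondeg_feasible_def det_on_D by simp
  show "U \<in> nondeg_feasible V (slide_adj V Adj fr a b) (slide_frame fr a b) \<longleftrightarrow>
        U \<in> slide_sys V ?P a b"
  proof (cases "U \<subseteq> V")
    case False
    then show ?thesis unfolding memL slide_sys_mem memP using assms(2) by blast
  next
    case UV: True
    note DM = D_main[OF assms UV]
    show ?thesis
    proof (cases "a \<in> U \<and> b \<notin> U")
      case True
      have "insert b (U - {a}) \<subseteq> V" using UV assms(3) by blast
      moreover have "U - {a} \<subseteq> V - {a, b}" using UV True by blast
      ultimately show ?thesis unfolding memL slide_sys_mem memP DM
        using True UV by (simp add: bit_sum_nz del: bit_not_zero_iff)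
    next
      case False
      then have nT: "\<not> (a \<in> U \<and> U - {a} \<subseteq> V - {a, b})" using assms(4) by blast
      show ?thesis unfolding memL slide_sys_mem memP DM
        using UV False nT by auto
    qed
  qed
qed

end
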